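(* Let $\Sigma=\Sigma^{(1)}\sqcup\Sigma^{(2)}$ be a finite set and $\Sigma^+:=\Sigma\sqcup\{*\}$. Let $C$ be a unital commutative $C^*$-algebra generated by positive elements $h_\sigma$, $\sigma\in\Sigma^+$, with $\sum_{\sigma\in\Sigma^+}h_\sigma=\mathbf{1}_C$, and let $h:\mathbb{C}^{\Sigma^+}\to C$ be the unital c.p. map $e_\sigma\mapsto h_\sigma$. Let $K$ be the simplicial complex with vertex set $\Sigma^+$ whose faces are the one-point subsets of $\Sigma^+$ together with the sets $\{\sigma_0,\dots,\sigma_l\}$ of distinct elements with $h_{\sigma_0}\cdots h_{\sigma_l}\neq 0$, let $\bar h_\nu\in C(|K|)$, $\nu\in\Sigma^+$, be its coordinate functions, and let $J:=K\cap\Delta^{\Sigma^{(1)}}$ be the subcomplex of faces of $K$ contained in $\Sigma^{(1)}$. Suppose that $h_{\sigma_0}\cdots h_{\sigma_{n+1}}=0$ for any distinct $\sigma_0,\dots,\sigma_{n+1}\in\Sigma$, and that $h|_{\mathbb{C}^{\Sigma^{(1)}}}$ is $n$-decomposable. Then there is a finite simplicial complex $\mathrm{Sd}_J K$ with vertex set $\Gamma$ such that: (i) $\Sigma^+\subset\Gamma\subset\{\text{faces of }K\}$ (identifying $\sigma\in\Sigma^+$ with the face $\{\sigma\}$), and every $\gamma\in\Gamma\setminus\Sigma^+$, regarded as a face of $K$, intersects $\Sigma^{(2)}$; (ii) the map $\beta:\Gamma\to|K|$ sending each $\gamma$ to the barycenter $\sum_{\nu\in\gamma}\frac{1}{\operatorname{card}\gamma}|\nu|$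 of the corresponding face of $|K|$ induces a linear homeomorphism $\bar\beta:|\mathrm{Sd}_J K|\to|K|$; (iii) $\mathrm{Sd}_J K\cap\Delta^{\Sigma^{(1)}}=J$ (so $|J|\subset|\mathrm{Sd}_J K|$ and $\bar\beta|_{|J|}=\mathrm{id}_{|J|}$); (iv) the coordinate functions $\bar k_\gamma\in C(|\mathrm{Sd}_J K|)$, $\gamma\in\Gamma$, define a unital c.p. map $\bar k:\mathbb{C}^\Gamma\to C(|\mathrm{Sd}_J K|)$ whose restriction to $\mathbb{C}^{\Gamma\setminus\{*\}}$ is $n$-decomposable, with $\bar k_\gamma(t)=\bar h_\gamma\circ\bar\beta(t)$ for all $\gamma\in\Sigma^{(1)}$ and $t\in|J|$, and moreover $\sum_{\gamma\in\Gamma\setminus\{*\}}\bar k_\gamma=\sum_{\sigma\in\Sigma}\bar h_\sigma\circ\bar\beta$.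
   Context: A finite simplicial complex $K$ is a collection of subsets (faces) of a finite vertex set $V(K)$ such that subsets of faces are faces and $\{\nu\}\in K$ for every $\nu\in V(K)$. For a set $M$, $\Delta^M$ is the full simplex (all subsets of $M$), and $K\cap\Delta^M$ is the subcomplex of faces of $K$ contained in $M$. The geometric realization is $|K|:=\{t\in[0,1]^{V(K)}:\sum_\nu t_\nu=1,\ \{\nu:t_\nu\neq0\}\in K\}$, with vertices $|\nu|$ (the point with $t_\nu=1$); a subcomplex $K'$ is identified with the subspace $|K'|\subset|K|$ of points with coordinates vanishing outside $V(K')$. The coordinate functions are $\bar h_\nu(t)=t_\nu$. If $\tau:V(K)\to|L|$ is a map such that for every face $\kappa$ of $K$ all convex combinations of $\{\tau(\nu):\nu\in\kappa\}$ lie in $|L|$, the induced linear map $\bar\tau:|K|\to|L|$ is $\bar\tau(t)=\sum_\nu t_\nu\tau(\nu)$. A c.p. map $\phi:\mathbb{C}^M\to D$ into a commutative $C^*$-algebra is $n$-decomposable if there is a partition $M=\coprod_{j=0}^n I_j$ such that $\phi(e_m)\phi(e_{m'})=0$ whenever $m\neq m'$ lie in the same $I_j$. *)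

theory Defs
  imports "HOL-Analysis.Analysis"
begin

definition fin_simplicial_complex :: "'v set \<Rightarrow> 'v set set \<Rightarrow> bool" where
  "fin_simplicial_complex V L \<longleftrightarrow>
     finite V \<and> (\<forall>F\<in>L. F \<subseteq> V) \<and> (\<forall>F\<in>L. \<forall>G. G \<subseteq> F \<longrightarrow> G \<in> L)
     \<and> (\<forall>v\<in>V. {v} \<in> L)"

text \<open>Geometric realization |L| as points of [0,1]^V (extended by 0 outside V),
  with the product topology on functions.\<close>
definition georeal :: "'v set \<Rightarrow> 'v set set \<Rightarrow> ('v \<Rightarrow> real) set" where
  "georeal V L = {t. (\<forall>v. 0 \<le> t v \<and> t v \<le> 1) \<and> (\<forall>v. v \<notin> V \<longrightarrow> t v = 0)
                    \<and> (\<Sum>v\<in>V. t v) = 1 \<and> {v\<in>V. t v \<noteq> 0} \<in> L}"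

definition vertex_pt :: "'v \<Rightarrow> ('v \<Rightarrow> real)" where
  "vertex_pt \<nu> = (\<lambda>w. if w = \<nu> then 1 else 0)"

definition lin_ext :: "'v set \<Rightarrow> ('v \<Rightarrow> ('w \<Rightarrow> real)) \<Rightarrow> ('v \<Rightarrow> real) \<Rightarrow> ('w \<Rightarrow> real)" where
  "lin_ext V \<tau> t = (\<lambda>w. \<Sum>v\<in>V. t v * \<tau> v w)"

definition barycenter :: "'a set \<Rightarrow> ('a \<Rightarrow> real)" where
  "barycenter \<gamma> = (\<lambda>w. \<Sum>\<nu>\<in>\<gamma>. (1 / real (card \<gamma>)) * vertex_pt \<nu> w)"

definition nerve_cx :: "'a set \<Rightarrow> ('a \<Rightarrow> 'x \<Rightarrow> real) \<Rightarrow> 'x set \<Rightarrow> 'a set set" where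
  "nerve_cx S h X = {F. F \<subseteq> S \<and> (F = {} \<or> card F = 1 \<or>
                         (finite F \<and> F \<noteq> {} \<and> (\<exists>x\<in>X. (\<Prod>\<sigma>\<in>F. h \<sigma> x) \<noteq> 0)))}"

text \<open>n-decomposability of the c.p. map e_m \<mapsto> f m (m in M) into functions on Y
  (a commutative C*-algebra): a partition of M into n+1 classes I_0..I_n, given
  by a colouring, with f m * f m' = 0 for distinct m, m' of the same class.\<close>
definition n_decomposable :: "nat \<Rightarrow> 'm set \<Rightarrow> ('m \<Rightarrow> 'y \<Rightarrow> real) \<Rightarrow> 'y set \<Rightarrow> bool" where
  "n_decomposable n M f Y \<longleftrightarrow>
     (\<exists>c :: 'm \<Rightarrow> nat. (\<forall>m\<in>M. c m \<le> n) \<and>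
        (\<forall>m\<in>M. \<forall>m'\<in>M. m \<noteq> m' \<and> c m = c m' \<longrightarrow> (\<forall>y\<in>Y. f m y * f m' y = 0)))"

end

theory Submission
  imports Defs
begin

locale sdctx =
  fixes S1 S2 :: "'a set" and star :: 'a and n :: nat and K :: "'a set set" and c :: "'a \<Rightarrow> nat"
  assumes fin1: "finite S1" and fin2: "finite S2" and disj: "S1 \<inter> S2 = {}"
    and star_notin: "star \<notin> S1 \<union> S2"
    and K_sub: "\<And>F. F \<in> K \<Longrightarrow> F \<subseteq> insert star (S1 \<union> S2)"
    and K_down: "\<And>F G. F \<in> K \<Longrightarrow> G \<subseteq> F \<Longrightarrow> G \<in> K"
    and K_sing: "\<And>v. v \<in> insert star (S1 \<union> S2) \<Longrightarrow> {v} \<in> K"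
    and K_dim: "\<And>F. F \<in> K \<Longrightarrow> F \<subseteq> S1 \<union> S2 \<Longrightarrow> card F \<le> Suc n"
    and c_le: "\<And>v. v \<in> S1 \<Longrightarrow> c v \<le> n"
    and c_inj: "\<And>F a b. F \<in> K \<Longrightarrow> a \<in> F \<Longrightarrow> b \<in> F \<Longrightarrow> a \<in> S1 \<Longrightarrow> b \<in> S1 \<Longrightarrow> c a = c b \<Longrightarrow> a = b"
begin

abbreviation PP where "PP \<equiv> insert star (S1 \<union> S2)"

definition SF where
  "SF = {\<gamma> \<in> K. \<gamma> \<subseteq> S1 \<union> S2 \<and> \<gamma> \<inter> S2 \<noteq> {} \<and> 2 \<le> card \<gamma> \<and> (\<forall>a\<in>\<gamma> \<inter> S1. c a + 2 \<le> card \<gamma>)}"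

definition Gam where "Gam = (\<lambda>v. {v}) ` PP \<union> SF"

definition isL where
  "isL \<tau> C \<longleftrightarrow> \<tau> \<subseteq> PP \<and> C \<subseteq> SF \<and> (\<forall>\<gamma>\<in>C. \<forall>\<gamma>'\<in>C. \<gamma> \<subseteq> \<gamma>' \<or> \<gamma>' \<subseteq> \<gamma>)
     \<and> \<tau> \<union> \<Union>C \<in> K \<and> (\<forall>\<delta>\<in>SF. \<not> \<delta> \<subseteq> \<tau>) \<and> (\<forall>\<gamma>\<in>C. \<forall>\<delta>\<in>SF. \<delta> \<subseteq> \<tau> \<union> \<gamma> \<longrightarrow> \<delta> \<subseteq> \<gamma>)"

definition LL where "LL = {(\<lambda>v. {v}) ` \<tau> \<union> C | \<tau> C. isL \<tau> C}"

definition lin where "lin t = lin_ext Gam barycenter t"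

definition Umax where "Umax D = \<Union>{\<delta>\<in>SF. \<delta> \<subseteq> D}"

definition supp :: "('a set \<Rightarrow> real) \<Rightarrow> 'a set set" where "supp t = {g\<in>Gam. t g \<noteq> 0}"

definition good :: "('a set \<Rightarrow> real) \<Rightarrow> bool" where "good t \<longleftrightarrow> (\<forall>g. 0 \<le> t g) \<and> (\<forall>g. g \<notin> Gam \<longrightarrow> t g = 0) \<and> supp t \<in> LL"

lemma finP: "finite PP" using fin1 fin2 by simp

lemma K_fin: "F \<in> K \<Longrightarrow> finite F" by (rule finite_subset[OF K_sub finP])

lemma SF_D: assumes "\<gamma> \<in> SF"
  shows "\<gamma> \<in> K" "\<gamma> \<subseteq> S1 \<union> S2" "\<gamma> \<inter> S2 \<noteq> {}" "2 \<le> card \<gamma>" "finite \<gamma>" "\<gamma> \<noteq> {}"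
    "\<gamma> \<subseteq> PP" "\<And>a. a \<in> \<gamma> \<Longrightarrow> a \<in> S1 \<Longrightarrow> c a + 2 \<le> card \<gamma>"
  using assms K_fin unfolding SF_def by auto

lemma SF_not_sing: assumes "\<gamma> \<in> SF" shows "\<gamma> \<noteq> {v}"
proof
  assume "\<gamma> = {v}"
  hence "card \<gamma> = 1" by simp
  thus False using SF_D(4)[OF assms] by simp
qed

lemma finite_SF: "finite SF"
proof -
  have "SF \<subseteq> Pow PP" using SF_D(7) by blast
  thus ?thesis by (rule finite_subset) (simp add: fin1 fin2)
qed

lemma finite_Gam: "finite Gam" unfolding Gam_def using finite_SF finP by simp

lemma Gam_D: assumes "g \<in> Gam" shows "finite g" "g \<noteq> {}" "g \<subseteq> PP" "0 < card g"
  using assms SF_D unfolding Gam_def by (auto simp: card_gt_0_iff)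

lemma bary_eq: "finite g \<Longrightarrow> barycenter g w = (if w \<in> g then 1 / real (card g) else 0)"
proof -
  assume fg: "finite g"
  have "barycenter g w = (1 / real (card g)) * (\<Sum>\<nu>\<in>g. if w = \<nu> then 1 else 0)"
    unfolding barycenter_def vertex_pt_def by (simp add: sum_distrib_left)
  also have "(\<Sum>\<nu>\<in>g. if w = \<nu> then 1 else 0) = (if w \<in> g then 1 else (0::real))"
    using fg by (simp add: sum.delta)
  finally show ?thesis by simp
qed

lemma Umax_SF: assumes "D \<in> K" "\<delta> \<in> SF" "\<delta> \<subseteq> D"
  shows "Umax D \<in> SF" "Umax D \<subseteq> D" "\<delta> \<subseteq> Umax D"
proof -
  let ?U = "Umax D"
  show sub: "?U \<subseteq> D" unfolding Umax_def by blast
  show dU: "\<delta> \<subseteq> ?U" unfolding Umax_def using assms by blast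
  have UK: "?U \<in> K" using K_down assms(1) sub by blast
  have finU: "finite ?U" using UK K_fin by blast
  have "?U \<subseteq> S1 \<union> S2" unfolding Umax_def using SF_D(2) by blast
  moreover have "?U \<inter> S2 \<noteq> {}" using SF_D(3)[OF assms(2)] dU by blast
  moreover have "2 \<le> card ?U" using SF_D(4)[OF assms(2)] card_mono[OF finU dU] by linarith
  moreover have "\<forall>a\<in>?U \<inter> S1. c a + 2 \<le> card ?U"
  proof
    fix a assume a: "a \<in> ?U \<inter> S1"
    then obtain \<delta>' where d': "\<delta>' \<in> SF" "\<delta>' \<subseteq> D" "a \<in> \<delta>'" unfolding Umax_def by blast
    have "\<delta>' \<subseteq> ?U" unfolding Umax_def using d' by blast
    hence "card \<delta>' \<le> card ?U" using card_mono finU by blast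
    moreover have "a \<in> S1" using a by blast
    ultimately show "c a + 2 \<le> card ?U" using SF_D(8)[OF d'(1) d'(3)] by linarith
  qed
  ultimately show "?U \<in> SF" unfolding SF_def using UK by blast
qed

lemma sing_notin_SF: "{v} \<notin> SF" using SF_not_sing by blast

lemma isL_D: assumes "isL \<tau> C"
  shows "\<tau> \<subseteq> PP" "C \<subseteq> SF" "\<And>\<gamma> \<gamma>'. \<gamma> \<in> C \<Longrightarrow> \<gamma>' \<in> C \<Longrightarrow> \<gamma> \<subseteq> \<gamma>' \<or> \<gamma>' \<subseteq> \<gamma>"
    "\<tau> \<union> \<Union>C \<in> K" "\<And>\<delta>. \<delta> \<in> SF \<Longrightarrow> \<not> \<delta> \<subseteq> \<tau>"
    "\<And>\<gamma> \<delta>. \<gamma> \<in> C \<Longrightarrow> \<delta> \<in> SF \<Longrightarrow> \<delta> \<subseteq> \<tau> \<union> \<gamma> \<Longrightarrow> \<delta> \<subseteq> \<gamma>"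
  using assms unfolding isL_def by simp_all

lemma isL_D': assumes "isL \<tau> C"
  shows "\<forall>x\<in>C. \<forall>y\<in>C. x \<subseteq> y \<or> y \<subseteq> x" "\<forall>\<delta>\<in>SF. \<not> \<delta> \<subseteq> \<tau>"
    "\<forall>\<gamma>\<in>C. \<forall>\<delta>\<in>SF. \<delta> \<subseteq> \<tau> \<union> \<gamma> \<longrightarrow> \<delta> \<subseteq> \<gamma>"
  using assms unfolding isL_def by simp_all

lemma isL_I: assumes "\<tau> \<subseteq> PP" "C \<subseteq> SF" "\<And>\<gamma> \<gamma>'. \<gamma> \<in> C \<Longrightarrow> \<gamma>' \<in> C \<Longrightarrow> \<gamma> \<subseteq> \<gamma>' \<or> \<gamma>' \<subseteq> \<gamma>"
    "\<tau> \<union> \<Union>C \<in> K" "\<And>\<delta>. \<delta> \<in> SF \<Longrightarrow> \<not> \<delta> \<subseteq> \<tau>"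
    "\<And>\<gamma> \<delta>. \<gamma> \<in> C \<Longrightarrow> \<delta> \<in> SF \<Longrightarrow> \<delta> \<subseteq> \<tau> \<union> \<gamma> \<Longrightarrow> \<delta> \<subseteq> \<gamma>"
  shows "isL \<tau> C"
  using assms unfolding isL_def by simp

lemma LL_E: assumes "F \<in> LL"
  obtains \<tau> C where "isL \<tau> C" "F = (\<lambda>v. {v}) ` \<tau> \<union> C"
  using assms unfolding LL_def by blast

lemma isL_parts: assumes "isL \<tau> C" "F = (\<lambda>v. {v}) ` \<tau> \<union> C"
  shows "\<tau> = {v. {v} \<in> F}" "C = F \<inter> SF" "\<Union>F = \<tau> \<union> \<Union>C"
  using assms sing_notin_SF isL_D(2)[OF assms(1)] by auto

lemma LL_sub: "F \<in> LL \<Longrightarrow> F \<subseteq> Gam"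
  by (elim LL_E) (auto simp: isL_def Gam_def)

lemma LL_down: assumes "F \<in> LL" "G \<subseteq> F" shows "G \<in> LL"
proof -
  obtain \<tau> C where L: "isL \<tau> C" "F = (\<lambda>v. {v}) ` \<tau> \<union> C" using assms(1) by (rule LL_E)
  define \<tau>' where "\<tau>' = {v\<in>\<tau>. {v} \<in> G}"
  define C' where "C' = C \<inter> G"
  have G: "G = (\<lambda>v. {v}) ` \<tau>' \<union> C'" using assms(2) L(2) unfolding \<tau>'_def C'_def by auto
  have sub0: "\<tau>' \<union> \<Union>C' \<subseteq> \<tau> \<union> \<Union>C" unfolding \<tau>'_def C'_def by auto
  have UK: "\<tau>' \<union> \<Union>C' \<in> K" by (rule K_down[OF isL_D(4)[OF L(1)] sub0])
  have sub: "\<tau>' \<subseteq> \<tau>" "C' \<subseteq> C" unfolding \<tau>'_def C'_def by auto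
  have "isL \<tau>' C'"
  proof (rule isL_I)
    show "\<tau>' \<subseteq> PP" using sub(1) isL_D(1)[OF L(1)] by (rule order_trans)
    show "C' \<subseteq> SF" using sub(2) isL_D(2)[OF L(1)] by (rule order_trans)
    show "\<tau>' \<union> \<Union>C' \<in> K" by (rule UK)
  next
    fix \<gamma> \<gamma>' assume "\<gamma> \<in> C'" "\<gamma>' \<in> C'"
    hence "\<gamma> \<in> C" "\<gamma>' \<in> C" using sub(2) by auto
    thus "\<gamma> \<subseteq> \<gamma>' \<or> \<gamma>' \<subseteq> \<gamma>" by (rule isL_D(3)[OF L(1)])
  next
    fix \<delta> assume "\<delta> \<in> SF"
    hence "\<not> \<delta> \<subseteq> \<tau>" by (rule isL_D(5)[OF L(1)])
    thus "\<not> \<delta> \<subseteq> \<tau>'" using sub(1) by auto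
  next
    fix \<gamma> \<delta> assume a: "\<gamma> \<in> C'" "\<delta> \<in> SF" "\<delta> \<subseteq> \<tau>' \<union> \<gamma>"
    have "\<delta> \<subseteq> \<tau> \<union> \<gamma>" using a(3) sub(1) by auto
    moreover have "\<gamma> \<in> C" using a(1) sub(2) by auto
    ultimately show "\<delta> \<subseteq> \<gamma>" using isL_D(6)[OF L(1)] a(2) by simp
  qed
  thus ?thesis using G unfolding LL_def by blast
qed

lemma sing_LL: "g \<in> Gam \<Longrightarrow> {g} \<in> LL"
proof -
  assume g: "g \<in> Gam"
  show ?thesis
  proof (cases "g \<in> SF")
    case True
    have "isL {} {g}" using True SF_D(1) SF_D(6) by (intro isL_I) auto
    moreover have "{g} = (\<lambda>v. {v}) ` {} \<union> {g}" by simp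
    ultimately show ?thesis unfolding LL_def by blast
  next
    case False
    then obtain v where v: "v \<in> PP" "g = {v}" using g unfolding Gam_def by blast
    have nd: "\<not> \<delta> \<subseteq> {v}" if "\<delta> \<in> SF" for \<delta>
      using SF_D(4)[OF that] card_mono[of "{v}" \<delta>] by fastforce
    have "isL {v} {}" using v K_sing nd by (intro isL_I) auto
    moreover have "{g} = (\<lambda>v. {v}) ` {v} \<union> {}" using v by simp
    ultimately show ?thesis unfolding LL_def by blast
  qed
qed

lemma fin_LL: "fin_simplicial_complex Gam LL"
  unfolding fin_simplicial_complex_def
  using finite_Gam LL_sub LL_down sing_LL by blast

lemma lin_eq: "lin t w = (\<Sum>g\<in>Gam. t g * (if w \<in> g then 1 / real (card g) else 0))"
  unfolding lin_def lin_ext_def by (intro sum.cong refl) (simp add: bary_eq Gam_D(1))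

lemma lin_nonneg: "(\<forall>g. 0 \<le> t g) \<Longrightarrow> 0 \<le> lin t w"
  unfolding lin_eq by (intro sum_nonneg) auto

lemma lin_outside: "w \<notin> PP \<Longrightarrow> lin t w = 0"
  unfolding lin_eq using Gam_D(3) by (intro sum.neutral) auto

lemma lin_nz: assumes "\<forall>g. 0 \<le> t g"
  shows "lin t w \<noteq> 0 \<longleftrightarrow> (\<exists>g\<in>Gam. t g \<noteq> 0 \<and> w \<in> g)"
proof -
  have "lin t w = 0 \<longleftrightarrow> (\<forall>g\<in>Gam. t g * (if w \<in> g then 1 / real (card g) else 0) = 0)"
    unfolding lin_eq using assms finite_Gam by (intro sum_nonneg_eq_0_iff) auto
  also have "\<dots> \<longleftrightarrow> (\<forall>g\<in>Gam. t g = 0 \<or> w \<notin> g)"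
  proof (intro ball_cong refl)
    fix g assume "g \<in> Gam"
    hence "real (card g) > 0" using Gam_D(4) by simp
    thus "(t g * (if w \<in> g then 1 / real (card g) else 0) = 0) = (t g = 0 \<or> w \<notin> g)" by auto
  qed
  finally have F: "lin t w = 0 \<longleftrightarrow> (\<forall>g\<in>Gam. t g = 0 \<or> w \<notin> g)" .
  show ?thesis
  proof
    assume "lin t w \<noteq> 0"
    hence "\<not> (\<forall>g\<in>Gam. t g = 0 \<or> w \<notin> g)" using F by simp
    thus "\<exists>g\<in>Gam. t g \<noteq> 0 \<and> w \<in> g" by blast
  next
    assume "\<exists>g\<in>Gam. t g \<noteq> 0 \<and> w \<in> g"
    hence "\<not> (\<forall>g\<in>Gam. t g = 0 \<or> w \<notin> g)" by blast
    thus "lin t w \<noteq> 0" using F by simp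
  qed
qed

lemma lin_supp: assumes "\<forall>g. 0 \<le> t g"
  shows "{w\<in>PP. lin t w \<noteq> 0} = \<Union>(supp t)"
proof (intro set_eqI iffI)
  fix w assume "w \<in> {w\<in>PP. lin t w \<noteq> 0}"
  hence "lin t w \<noteq> 0" by simp
  then obtain g where "g\<in>Gam" "t g \<noteq> 0" "w\<in>g" using lin_nz[OF assms, of w] by blast
  thus "w \<in> \<Union>(supp t)" unfolding supp_def by blast
next
  fix w assume "w \<in> \<Union>(supp t)"
  then obtain g where g: "g\<in>Gam" "t g \<noteq> 0" "w \<in> g" unfolding supp_def by blast
  hence "lin t w \<noteq> 0" using lin_nz[OF assms, of w] by blast
  moreover have "w \<in> PP" using g Gam_D(3) by blast
  ultimately show "w \<in> {w\<in>PP. lin t w \<noteq> 0}" by blast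
qed

lemma lin_sum: assumes "finite A"
  shows "sum (lin t) A = (\<Sum>g\<in>Gam. t g * (real (card (A \<inter> g)) / real (card g)))"
proof -
  have "sum (lin t) A = (\<Sum>w\<in>A. \<Sum>g\<in>Gam. t g * (if w \<in> g then 1 / real (card g) else 0))"
    unfolding lin_eq by simp
  also have "\<dots> = (\<Sum>g\<in>Gam. \<Sum>w\<in>A. t g * (if w \<in> g then 1 / real (card g) else 0))"
    by (rule sum.swap)
  also have "\<dots> = (\<Sum>g\<in>Gam. t g * (\<Sum>w\<in>A. (if w \<in> g then 1 / real (card g) else 0)))"
    by (simp add: sum_distrib_left)
  also have "\<dots> = (\<Sum>g\<in>Gam. t g * (real (card (A \<inter> g)) / real (card g)))"
  proof (rule sum.cong[OF refl])
    fix g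
    have "(\<Sum>w\<in>A. (if w \<in> g then 1 / real (card g) else 0)) = (\<Sum>w\<in>{w\<in>A. w \<in> g}. 1 / real (card g))"
      using sum.inter_filter[OF assms, of "\<lambda>_. 1 / real (card g)" "\<lambda>w. w \<in> g"] by simp
    also have "{w\<in>A. w \<in> g} = A \<inter> g" by blast
    finally show "t g * (\<Sum>w\<in>A. (if w \<in> g then 1 / real (card g) else 0)) = t g * (real (card (A \<inter> g)) / real (card g))"
      by simp
  qed
  finally show ?thesis .
qed

lemma lin_mass: "sum (lin t) PP = sum t Gam"
proof -
  have "sum (lin t) PP = (\<Sum>g\<in>Gam. t g * (real (card (PP \<inter> g)) / real (card g)))"
    using lin_sum finP by blast
  also have "\<dots> = sum t Gam"
  proof (rule sum.cong[OF refl])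
    fix g assume g: "g \<in> Gam"
    have "PP \<inter> g = g" using Gam_D(3)[OF g] by blast
    thus "t g * (real (card (PP \<inter> g)) / real (card g)) = t g" using Gam_D(4)[OF g] by simp
  qed
  finally show ?thesis .
qed

lemma lin_sigma: "sum (lin t) (S1 \<union> S2) = sum t (Gam - {{star}})"
proof -
  have "sum (lin t) (S1 \<union> S2) = (\<Sum>g\<in>Gam. t g * (real (card ((S1 \<union> S2) \<inter> g)) / real (card g)))"
    using lin_sum fin1 fin2 by blast
  also have "\<dots> = (\<Sum>g\<in>Gam. if g = {star} then 0 else t g)"
  proof (rule sum.cong[OF refl])
    fix g assume g: "g \<in> Gam"
    show "t g * (real (card ((S1 \<union> S2) \<inter> g)) / real (card g)) = (if g = {star} then 0 else t g)"
    proof (cases "g = {star}")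
      case True
      then show ?thesis using star_notin by simp
    next
      case False
      have "g \<subseteq> S1 \<union> S2" using g False SF_D(2) unfolding Gam_def by auto
      hence "(S1 \<union> S2) \<inter> g = g" by blast
      then show ?thesis using False Gam_D(4)[OF g] by simp
    qed
  qed
  also have "\<dots> = sum t (Gam - {{star}})"
    using finite_Gam by (simp add: sum.If_cases Diff_eq)
  finally show ?thesis .
qed

lemma lin_single: assumes "g0 \<in> Gam" "w \<in> g0" "\<forall>g\<in>Gam. g \<noteq> g0 \<longrightarrow> t g = 0 \<or> w \<notin> g"
  shows "lin t w = t g0 / real (card g0)"
proof -
  have "lin t w = t g0 * (if w \<in> g0 then 1 / real (card g0) else 0) +
      (\<Sum>g\<in>Gam - {g0}. t g * (if w \<in> g then 1 / real (card g) else 0))"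
    unfolding lin_eq by (rule sum.remove[OF finite_Gam assms(1)])
  also have "(\<Sum>g\<in>Gam - {g0}. t g * (if w \<in> g then 1 / real (card g) else 0)) = 0"
    using assms(3) by (intro sum.neutral) auto
  finally show ?thesis using assms(2) by simp
qed

lemma lin_ge: assumes "\<forall>g. 0 \<le> t g" "g0 \<in> Gam" "w \<in> g0"
  shows "t g0 / real (card g0) \<le> lin t w"
proof -
  have "t g0 * (if w \<in> g0 then 1 / real (card g0) else 0) \<le> lin t w"
    unfolding lin_eq using assms finite_Gam by (intro member_le_sum) auto
  thus ?thesis using assms(3) by simp
qed

lemma lin_upd: assumes "\<gamma> \<in> Gam"
  shows "lin (\<lambda>g. t g + (if g = \<gamma> then a else 0)) w = lin t w + (if w \<in> \<gamma> then a / real (card \<gamma>) else 0)"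
proof -
  define b where "b g = (if w \<in> g then 1 / real (card g) else 0)" for g :: "'a set"
  have "lin (\<lambda>g. t g + (if g = \<gamma> then a else 0)) w = (\<Sum>g\<in>Gam. (t g + (if g = \<gamma> then a else 0)) * b g)"
    unfolding lin_eq b_def by simp
  also have "\<dots> = (\<Sum>g\<in>Gam. t g * b g + (if g = \<gamma> then a * b g else 0))"
    by (rule sum.cong) (auto simp: distrib_right)
  also have "\<dots> = (\<Sum>g\<in>Gam. t g * b g) + (\<Sum>g\<in>Gam. if g = \<gamma> then a * b g else 0)"
    by (rule sum.distrib)
  also have "(\<Sum>g\<in>Gam. if g = \<gamma> then a * b g else 0) = a * b \<gamma>"
    using finite_Gam assms by (simp add: sum.delta)
  finally show ?thesis unfolding lin_eq b_def by simp
qed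

lemma chain_max: assumes "finite C" "C \<noteq> {}" "\<forall>x\<in>C. finite x" "\<forall>x\<in>C. \<forall>y\<in>C. x \<subseteq> y \<or> y \<subseteq> x"
  shows "\<exists>m\<in>C. \<forall>x\<in>C. x \<subseteq> m"
proof -
  have "Max (card ` C) \<in> card ` C" using Max_in[of "card ` C"] assms(1,2) by auto
  then obtain m where m: "m \<in> C" "card m = Max (card ` C)" by auto
  have "\<forall>x\<in>C. x \<subseteq> m"
  proof
    fix x assume x: "x \<in> C"
    have cx: "card x \<le> card m" using m x assms(1) by simp
    show "x \<subseteq> m"
    proof (rule ccontr)
      assume "\<not> x \<subseteq> m"
      hence "m \<subset> x" using assms(4) x m(1) by blast
      hence "card m < card x" using psubset_card_mono assms(3) x by blast
      thus False using cx by simp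
    qed
  qed
  thus ?thesis using m(1) by blast
qed

lemma isL_fin: "isL \<tau> C \<Longrightarrow> finite C" 
  using isL_D(2) finite_SF finite_subset by metis

lemma surj_aux:
  "(\<forall>w. 0 \<le> x w) \<Longrightarrow> (\<forall>w. w \<notin> PP \<longrightarrow> x w = 0) \<Longrightarrow> {w\<in>PP. x w \<noteq> 0} \<in> K \<Longrightarrow> \<exists>t. good t \<and> lin t = x"
proof (induction "card {w\<in>PP. x w \<noteq> 0}" arbitrary: x rule: less_induct)
  case less
  define D where "D = {w\<in>PP. x w \<noteq> 0}"
  have DK: "D \<in> K" using less.prems D_def by simp
  have finD: "finite D" using DK K_fin by blast
  show ?case
  proof (cases "\<exists>\<delta>\<in>SF. \<delta> \<subseteq> D")
    case False
    define t where "t = (\<lambda>g. if g \<in> (\<lambda>v. {v}) ` PP then x (the_elem g) else 0)"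
    have t0: "\<forall>g. 0 \<le> t g" using less.prems(1) unfolding t_def by simp
    have t1: "\<forall>g. g \<notin> Gam \<longrightarrow> t g = 0" unfolding t_def Gam_def by auto
    have st: "supp t = (\<lambda>v. {v}) ` D" unfolding supp_def t_def Gam_def D_def by auto
    have "isL D {}" using DK False D_def by (intro isL_I) auto
    hence "supp t \<in> LL" unfolding LL_def st by blast
    hence good: "good t" unfolding good_def using t0 t1 by blast
    have "lin t = x"
    proof
      fix w
      show "lin t w = x w"
      proof (cases "w \<in> PP")
        case True
        have "{w} \<in> Gam" using True unfolding Gam_def by blast
        moreover have "\<forall>g\<in>Gam. g \<noteq> {w} \<longrightarrow> t g = 0 \<or> w \<notin> g" unfolding t_def by auto
        ultimately have "lin t w = t {w} / real (card {w})" using lin_single by blast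
        moreover have "t {w} = x w" unfolding t_def using True by force
        ultimately show ?thesis by simp
      next
        case False
        thus ?thesis using lin_outside less.prems(2) by simp
      qed
    qed
    thus ?thesis using good by blast
  next
    case True
    then obtain \<delta> where \<delta>: "\<delta> \<in> SF" "\<delta> \<subseteq> D" by blast
    define \<gamma> where "\<gamma> = Umax D"
    have \<gamma>: "\<gamma> \<in> SF" "\<gamma> \<subseteq> D" using Umax_SF[OF DK \<delta>] \<gamma>_def by blast+
    have \<gamma>max: "\<And>\<delta>'. \<delta>' \<in> SF \<Longrightarrow> \<delta>' \<subseteq> D \<Longrightarrow> \<delta>' \<subseteq> \<gamma>" using Umax_SF(3)[OF DK] \<gamma>_def by blast
    have fin\<gamma>: "finite \<gamma>" "\<gamma> \<noteq> {}" using SF_D \<gamma>(1) by auto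
    define \<mu> where "\<mu> = Min (x ` \<gamma>)"
    have \<mu>_le: "\<forall>w\<in>\<gamma>. \<mu> \<le> x w" by (simp add: \<mu>_def fin\<gamma>)
    have "\<mu> \<in> x ` \<gamma>" unfolding \<mu>_def using fin\<gamma> by (intro Min_in) auto
    then obtain w0 where w0: "w0 \<in> \<gamma>" "x w0 = \<mu>" by (metis imageE)
    have \<mu>pos: "0 < \<mu>" using w0 \<gamma>(2) less.prems(1) unfolding D_def
      by (metis (mono_tags, lifting) mem_Collect_eq order_le_less subsetD)
    define x' where "x' = (\<lambda>w. if w \<in> \<gamma> then x w - \<mu> else x w)"
    have x'0: "\<forall>w. 0 \<le> x' w" using \<mu>_le less.prems(1) unfolding x'_def by auto
    have x'1: "\<forall>w. w \<notin> PP \<longrightarrow> x' w = 0" using less.prems(2) \<gamma>(2) unfolding x'_def D_def by auto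
    define D' where "D' = {w\<in>PP. x' w \<noteq> 0}"
    have D'D: "D' \<subseteq> D" unfolding D'_def D_def x'_def using \<mu>pos \<mu>_le by auto
    have w0D: "w0 \<in> D" "w0 \<notin> D'" using w0 \<gamma>(2) unfolding D'_def x'_def by auto
    have D'K: "D' \<in> K" by (rule K_down[OF DK D'D])
    have "D' \<subset> D" using D'D w0D by blast
    hence "card D' < card D" by (rule psubset_card_mono[OF finD])
    then obtain t' where t': "good t'" "lin t' = x'"
      using less.hyps[of x'] x'0 x'1 D'K unfolding D_def D'_def by blast
    define t where "t = (\<lambda>g. t' g + (if g = \<gamma> then \<mu> * real (card \<gamma>) else 0))"
    have \<gamma>Gam: "\<gamma> \<in> Gam" using \<gamma>(1) unfolding Gam_def by blast
    have cpos: "0 < real (card \<gamma>)" using fin\<gamma> by (simp add: card_gt_0_iff)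
    have lin: "lin t = x"
    proof
      fix w
      have "lin t w = x' w + (if w \<in> \<gamma> then \<mu> * real (card \<gamma>) / real (card \<gamma>) else 0)"
        unfolding t_def lin_upd[OF \<gamma>Gam] t'(2) by simp
      thus "lin t w = x w" unfolding x'_def using cpos by simp
    qed
    have t'0: "\<forall>g. 0 \<le> t' g" "\<forall>g. g \<notin> Gam \<longrightarrow> t' g = 0" "supp t' \<in> LL" using t'(1) unfolding good_def by auto
    have t0: "\<forall>g. 0 \<le> t g" using t'0(1) \<mu>pos cpos unfolding t_def by simp
    have t1: "\<forall>g. g \<notin> Gam \<longrightarrow> t g = 0" using t'0(2) \<gamma>Gam unfolding t_def by auto
    have st: "supp t = insert \<gamma> (supp t')"
    proof -
      have "t g \<noteq> 0 \<longleftrightarrow> t' g \<noteq> 0 \<or> g = \<gamma>" for g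
      proof (cases "g = \<gamma>")
        case True
        have "0 < \<mu> * real (card \<gamma>)" using \<mu>pos cpos by simp
        moreover have "0 \<le> t' g" using t'0(1) by blast
        ultimately show ?thesis using True unfolding t_def by simp
      next
        case False
        thus ?thesis unfolding t_def by simp
      qed
      thus ?thesis unfolding supp_def using \<gamma>Gam by auto
    qed
    obtain \<tau> C where L: "isL \<tau> C" "supp t' = (\<lambda>v. {v}) ` \<tau> \<union> C" using t'0(3) by (rule LL_E)
    have U: "\<tau> \<union> \<Union>C = D'"
      using lin_supp[OF t'0(1)] isL_parts(3)[OF L] t'(2) unfolding D'_def by simp
    have "isL \<tau> (insert \<gamma> C)"
    proof -
      have Csub: "\<forall>\<gamma>'\<in>C. \<gamma>' \<subseteq> \<gamma>"
      proof
        fix \<gamma>' assume "\<gamma>' \<in> C"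
        hence "\<gamma>' \<in> SF" "\<gamma>' \<subseteq> D" using isL_D(2)[OF L(1)] U D'D by auto
        thus "\<gamma>' \<subseteq> \<gamma>" using \<gamma>max by blast
      qed
      have "\<tau> \<union> \<Union>(insert \<gamma> C) \<subseteq> D" using U D'D \<gamma>(2) by blast
      hence K1: "\<tau> \<union> \<Union>(insert \<gamma> C) \<in> K" by (rule K_down[OF DK])
      have "\<forall>\<delta>\<in>SF. \<delta> \<subseteq> \<tau> \<union> \<gamma> \<longrightarrow> \<delta> \<subseteq> \<gamma>"
      proof (intro ballI impI)
        fix \<delta> assume "\<delta> \<in> SF" "\<delta> \<subseteq> \<tau> \<union> \<gamma>"
        moreover have "\<tau> \<union> \<gamma> \<subseteq> D" using U D'D \<gamma>(2) by blast
        ultimately show "\<delta> \<subseteq> \<gamma>" using \<gamma>max by blast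
      qed
      show ?thesis
      proof (rule isL_I)
        show "\<tau> \<subseteq> PP" using isL_D(1)[OF L(1)] .
        show "insert \<gamma> C \<subseteq> SF" using isL_D(2)[OF L(1)] \<gamma>(1) by blast
        show "\<tau> \<union> \<Union>(insert \<gamma> C) \<in> K" using K1 .
        show "\<And>\<delta>. \<delta> \<in> SF \<Longrightarrow> \<not> \<delta> \<subseteq> \<tau>" using isL_D(5)[OF L(1)] .
        fix g g' assume "g \<in> insert \<gamma> C" "g' \<in> insert \<gamma> C"
        thus "g \<subseteq> g' \<or> g' \<subseteq> g" using Csub isL_D(3)[OF L(1)] by blast
      next
        fix g \<delta> assume "g \<in> insert \<gamma> C" "\<delta> \<in> SF" "\<delta> \<subseteq> \<tau> \<union> g"
        thus "\<delta> \<subseteq> g" using isL_D(6)[OF L(1)] \<open>\<forall>\<delta>\<in>SF. \<delta> \<subseteq> \<tau> \<union> \<gamma> \<longrightarrow> \<delta> \<subseteq> \<gamma>\<close> by blast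
      qed
    qed
    moreover have "supp t = (\<lambda>v. {v}) ` \<tau> \<union> insert \<gamma> C" using st L(2) by blast
    ultimately have "supp t \<in> LL" unfolding LL_def by blast
    hence "good t" unfolding good_def using t0 t1 by blast
    thus ?thesis using lin by blast
  qed
qed

lemma top_lemma:
  assumes g: "good t" and L: "isL \<tau> C" "supp t = (\<lambda>v. {v}) ` \<tau> \<union> C" and C: "C \<noteq> {}"
  shows "Umax {w\<in>PP. lin t w \<noteq> 0} \<in> C"
    "\<exists>w\<in>Umax {w\<in>PP. lin t w \<noteq> 0}. lin t w = t (Umax {w\<in>PP. lin t w \<noteq> 0}) / real (card (Umax {w\<in>PP. lin t w \<noteq> 0}))"
proof -
  have t0: "\<forall>g. 0 \<le> t g" using g unfolding good_def by blast
  have CS: "C \<subseteq> SF" and chain: "\<forall>x\<in>C. \<forall>y\<in>C. x \<subseteq> y \<or> y \<subseteq> x"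
    and nt: "\<forall>\<delta>\<in>SF. \<not> \<delta> \<subseteq> \<tau>" and bb: "\<forall>\<gamma>\<in>C. \<forall>\<delta>\<in>SF. \<delta> \<subseteq> \<tau> \<union> \<gamma> \<longrightarrow> \<delta> \<subseteq> \<gamma>"
    using isL_D(2)[OF L(1)] isL_D'[OF L(1)] by simp_all
  have finC: "finite C" using isL_fin L(1) by blast
  obtain m where m: "m \<in> C" "\<forall>x\<in>C. x \<subseteq> m"
    using chain_max[OF finC C _ chain] CS SF_D(5) by blast
  have D: "{w\<in>PP. lin t w \<noteq> 0} = \<tau> \<union> m"
    using lin_supp[OF t0] isL_parts(3)[OF L] m by blast
  have mS: "m \<in> SF" using m CS by blast
  have Um: "Umax {w\<in>PP. lin t w \<noteq> 0} = m"
    unfolding D Umax_def using bb m mS by blast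
  show "Umax {w\<in>PP. lin t w \<noteq> 0} \<in> C" using Um m by simp
  have "\<exists>w\<in>m. w \<notin> \<tau> \<and> (\<forall>\<gamma>'\<in>C - {m}. w \<notin> \<gamma>')"
  proof (cases "C - {m} = {}")
    case True
    have "\<not> m \<subseteq> \<tau>" using nt mS by blast
    then obtain w where "w \<in> m" "w \<notin> \<tau>" by blast
    then show ?thesis using True by blast
  next
    case False
    have f1: "finite (C - {m})" using finC by simp
    have f2: "\<forall>x\<in>C - {m}. finite x" using CS SF_D(5) by blast
    have f3: "\<forall>x\<in>C - {m}. \<forall>y\<in>C - {m}. x \<subseteq> y \<or> y \<subseteq> x" using chain by blast
    obtain m' where m': "m' \<in> C - {m}" "\<forall>x\<in>C - {m}. x \<subseteq> m'"
      using chain_max[OF f1 False f2 f3] by blast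
    have "\<not> m \<subseteq> \<tau> \<union> m'"
    proof
      assume "m \<subseteq> \<tau> \<union> m'"
      hence "m \<subseteq> m'" using bb m' mS by blast
      moreover have "m' \<subseteq> m" using m m' by blast
      ultimately show False using m' by blast
    qed
    then show ?thesis using m' by blast
  qed
  then obtain w where w: "w \<in> m" "w \<notin> \<tau>" "\<forall>\<gamma>'\<in>C - {m}. w \<notin> \<gamma>'" by blast
  have mG: "m \<in> Gam" using mS unfolding Gam_def by blast
  have "\<forall>g\<in>Gam. g \<noteq> m \<longrightarrow> t g = 0 \<or> w \<notin> g"
  proof (intro ballI impI)
    fix g assume "g \<in> Gam" "g \<noteq> m"
    show "t g = 0 \<or> w \<notin> g"
    proof (cases "t g = 0")
      case False
      hence "g \<in> supp t" using \<open>g \<in> Gam\<close> unfolding supp_def by blast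
      thus ?thesis using L(2) w \<open>g \<noteq> m\<close> by auto
    qed simp
  qed
  hence "lin t w = t m / real (card m)" using lin_single[OF mG w(1)] by blast
  thus "\<exists>w\<in>Umax {w\<in>PP. lin t w \<noteq> 0}. lin t w = t (Umax {w\<in>PP. lin t w \<noteq> 0}) / real (card (Umax {w\<in>PP. lin t w \<noteq> 0}))"
    using Um w(1) by auto
qed


lemma inj_aux:
  "good t1 \<Longrightarrow> good t2 \<Longrightarrow> lin t1 = lin t2 \<Longrightarrow> t1 = t2"
proof (induction "card {w\<in>PP. lin t1 w \<noteq> 0}" arbitrary: t1 t2 rule: less_induct)
  case less
  define x where "x = lin t1"
  define D where "D = {w\<in>PP. x w \<noteq> 0}"
  have t10: "\<forall>g. 0 \<le> t1 g" "\<forall>g. g \<notin> Gam \<longrightarrow> t1 g = 0" "supp t1 \<in> LL"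
    using less.prems(1) unfolding good_def by auto
  have t20: "\<forall>g. 0 \<le> t2 g" "\<forall>g. g \<notin> Gam \<longrightarrow> t2 g = 0" "supp t2 \<in> LL"
    using less.prems(2) unfolding good_def by auto
  obtain \<tau>1 C1 where L1: "isL \<tau>1 C1" "supp t1 = (\<lambda>v. {v}) ` \<tau>1 \<union> C1" using t10(3) by (rule LL_E)
  obtain \<tau>2 C2 where L2: "isL \<tau>2 C2" "supp t2 = (\<lambda>v. {v}) ` \<tau>2 \<union> C2" using t20(3) by (rule LL_E)
  have D1: "D = \<tau>1 \<union> \<Union>C1"
    using lin_supp[OF t10(1)] isL_parts(3)[OF L1] unfolding D_def x_def by simp
  have D2: "D = \<tau>2 \<union> \<Union>C2"
    using lin_supp[OF t20(1)] isL_parts(3)[OF L2] less.prems(3) unfolding D_def x_def by simp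
  have C1S: "C1 \<subseteq> SF" and nt1: "\<forall>\<delta>\<in>SF. \<not> \<delta> \<subseteq> \<tau>1" using isL_D(2)[OF L1(1)] isL_D'(2)[OF L1(1)] by simp_all
  have C2S: "C2 \<subseteq> SF" and nt2: "\<forall>\<delta>\<in>SF. \<not> \<delta> \<subseteq> \<tau>2" using isL_D(2)[OF L2(1)] isL_D'(2)[OF L2(1)] by simp_all
  show ?case
  proof (cases "C1 = {}")
    case True
    have C2: "C2 = {}"
    proof (rule ccontr)
      assume "C2 \<noteq> {}"
      then obtain \<gamma> where "\<gamma> \<in> C2" by blast
      hence "\<gamma> \<in> SF" "\<gamma> \<subseteq> \<tau>1" using C2S D1 D2 True by auto
      thus False using nt1 by blast
    qed
    have val: "t {v} = x v" if "good t" "lin t = x" "supp t = (\<lambda>v. {v}) ` \<tau>"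
      "v \<in> PP" for t \<tau> v
    proof -
      have "{v} \<in> Gam" using that(4) unfolding Gam_def by blast
      moreover have "\<forall>g\<in>Gam. g \<noteq> {v} \<longrightarrow> t g = 0 \<or> v \<notin> g"
      proof (intro ballI impI)
        fix g assume g: "g \<in> Gam" "g \<noteq> {v}"
        show "t g = 0 \<or> v \<notin> g"
        proof (cases "t g = 0")
          case False
          hence "g \<in> supp t" using g unfolding supp_def by blast
          thus ?thesis using that(3) g(2) by auto
        qed simp
      qed
      ultimately have "lin t v = t {v} / real (card {v})" using lin_single by blast
      thus ?thesis using that(2) by simp
    qed
    have s1: "supp t1 = (\<lambda>v. {v}) ` \<tau>1" using L1(2) True by simp
    have s2: "supp t2 = (\<lambda>v. {v}) ` \<tau>2" using L2(2) C2 by simp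
    show "t1 = t2"
    proof
      fix g
      show "t1 g = t2 g"
      proof (cases "g \<in> (\<lambda>v. {v}) ` PP")
        case True
        then obtain v where v: "v \<in> PP" "g = {v}" by blast
        have "t1 {v} = x v" using val[OF less.prems(1) _ s1 v(1)] x_def by simp
        moreover have "t2 {v} = x v" using val[OF less.prems(2) _ s2 v(1)] x_def less.prems(3) by simp
        ultimately show ?thesis using v by simp
      next
        case False
        have "g \<notin> supp t1" "g \<notin> supp t2" using False s1 s2 isL_D(1)[OF L1(1)] isL_D(1)[OF L2(1)] by auto
        thus ?thesis unfolding supp_def using t10(2) t20(2) by auto
      qed
    qed
  next
    case False
    have C2: "C2 \<noteq> {}"
    proof
      assume C2: "C2 = {}"
      obtain \<gamma> where "\<gamma> \<in> C1" using False by blast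
      hence "\<gamma> \<in> SF" "\<gamma> \<subseteq> \<tau>2" using C1S D1 D2 C2 by auto
      thus False using nt2 by blast
    qed
    define \<gamma> where "\<gamma> = Umax D"
    have \<gamma>1: "\<gamma> \<in> C1" "\<exists>w\<in>\<gamma>. x w = t1 \<gamma> / real (card \<gamma>)"
      using top_lemma[OF less.prems(1) L1 False] unfolding \<gamma>_def D_def x_def by auto
    have \<gamma>2: "\<gamma> \<in> C2" "\<exists>w\<in>\<gamma>. x w = t2 \<gamma> / real (card \<gamma>)"
      using top_lemma[OF less.prems(2) L2 C2] less.prems(3) unfolding \<gamma>_def D_def x_def by auto
    have \<gamma>S: "\<gamma> \<in> SF" using \<gamma>1 C1S by blast
    have \<gamma>G: "\<gamma> \<in> Gam" using \<gamma>S unfolding Gam_def by blast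
    have cpos: "0 < real (card \<gamma>)" using Gam_D(4)[OF \<gamma>G] by simp
    have ge1: "\<forall>w\<in>\<gamma>. t1 \<gamma> / real (card \<gamma>) \<le> x w" using lin_ge[OF t10(1) \<gamma>G] x_def by blast
    have ge2: "\<forall>w\<in>\<gamma>. t2 \<gamma> / real (card \<gamma>) \<le> x w" using lin_ge[OF t20(1) \<gamma>G] x_def less.prems(3) by metis
    obtain w1 where w1: "w1 \<in> \<gamma>" "x w1 = t1 \<gamma> / real (card \<gamma>)" using \<gamma>1 by blast
    obtain w2 where w2: "w2 \<in> \<gamma>" "x w2 = t2 \<gamma> / real (card \<gamma>)" using \<gamma>2 by blast
    have "t1 \<gamma> / real (card \<gamma>) = t2 \<gamma> / real (card \<gamma>)"
      using ge1 ge2 w1 w2 by (metis order_antisym)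
    hence eq: "t1 \<gamma> = t2 \<gamma>" using cpos by simp
    define t1' where "t1' = (\<lambda>g. t1 g + (if g = \<gamma> then - t1 \<gamma> else 0))"
    define t2' where "t2' = (\<lambda>g. t2 g + (if g = \<gamma> then - t2 \<gamma> else 0))"
    have good': "good t'" if "good t" "t' = (\<lambda>g. t g + (if g = \<gamma> then - t \<gamma> else 0))" for t t'
    proof -
      have a: "\<forall>g. 0 \<le> t g" "\<forall>g. g \<notin> Gam \<longrightarrow> t g = 0" "supp t \<in> LL"
        using that(1) unfolding good_def by auto
      have "supp t' \<subseteq> supp t"
      proof
        fix g assume g: "g \<in> supp t'"
        have "g \<noteq> \<gamma>"
        proof
          assume "g = \<gamma>"
          hence "t' g = 0" unfolding that(2) by simp
          thus False using g unfolding supp_def by simp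
        qed
        thus "g \<in> supp t" using g unfolding supp_def that(2) by simp
      qed
      hence "supp t' \<in> LL" using LL_down a(3) by blast
      moreover have "\<forall>g. 0 \<le> t' g" using a(1) unfolding that(2) by simp
      moreover have "\<forall>g. g \<notin> Gam \<longrightarrow> t' g = 0"
      proof (intro allI impI)
        fix g assume "g \<notin> Gam"
        hence "g \<noteq> \<gamma>" "t g = 0" using \<gamma>G a(2) by auto
        thus "t' g = 0" unfolding that(2) by simp
      qed
      ultimately show ?thesis unfolding good_def by blast
    qed
    have g1': "good t1'" using good'[OF less.prems(1)] t1'_def by blast
    have g2': "good t2'" using good'[OF less.prems(2)] t2'_def by blast
    have lin1: "lin t1' w = x w + (if w \<in> \<gamma> then - t1 \<gamma> / real (card \<gamma>) else 0)" for w
      unfolding t1'_def lin_upd[OF \<gamma>G] x_def by simp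
    have lin2: "lin t2' w = x w + (if w \<in> \<gamma> then - t2 \<gamma> / real (card \<gamma>) else 0)" for w
      unfolding t2'_def lin_upd[OF \<gamma>G] x_def less.prems(3) by simp
    have lin12: "lin t1' = lin t2'" using lin1 lin2 eq by auto
    have D'sub: "{w\<in>PP. lin t1' w \<noteq> 0} \<subseteq> D"
    proof
      fix w assume w: "w \<in> {w\<in>PP. lin t1' w \<noteq> 0}"
      have "0 \<le> t1 \<gamma> / real (card \<gamma>)" using t10(1) cpos by simp
      moreover have "0 \<le> lin t1' w" using lin_nonneg g1' unfolding good_def by blast
      ultimately show "w \<in> D" using w lin1[of w] unfolding D_def by (auto split: if_splits)
    qed
    have w1D: "w1 \<in> D" "w1 \<notin> {w\<in>PP. lin t1' w \<noteq> 0}"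
    proof -
      have "x w1 \<noteq> 0 \<or> t1 \<gamma> = 0" using w1 cpos by auto
      moreover have "t1 \<gamma> \<noteq> 0" using \<gamma>1(1) L1(2) unfolding supp_def by blast
      ultimately have "x w1 \<noteq> 0" by blast
      moreover have "w1 \<in> PP" using w1(1) SF_D(7)[OF \<gamma>S] by blast
      ultimately show "w1 \<in> D" unfolding D_def by blast
      show "w1 \<notin> {w\<in>PP. lin t1' w \<noteq> 0}" using lin1[of w1] w1 by simp
    qed
    have "D \<subseteq> PP" unfolding D_def by blast
    hence finD: "finite D" using finP by (rule finite_subset)
    have "{w\<in>PP. lin t1' w \<noteq> 0} \<subset> D" using D'sub w1D by blast
    hence "card {w\<in>PP. lin t1' w \<noteq> 0} < card D" by (rule psubset_card_mono[OF finD])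
    hence "t1' = t2'" using less.hyps g1' g2' lin12 unfolding D_def x_def by blast
    show "t1 = t2"
    proof
      fix g
      have "t1 g = t1' g + (if g = \<gamma> then t1 \<gamma> else 0)" unfolding t1'_def by simp
      moreover have "t2 g = t2' g + (if g = \<gamma> then t2 \<gamma> else 0)" unfolding t2'_def by simp
      ultimately show "t1 g = t2 g" using \<open>t1' = t2'\<close> eq by simp
    qed
  qed
qed

lemma georeal_good: "t \<in> georeal Gam LL \<Longrightarrow> good t"
  unfolding georeal_def good_def supp_def by auto

lemma lin_into: assumes t: "t \<in> georeal Gam LL" shows "lin t \<in> georeal PP K"
proof -
  have g: "good t" using georeal_good t by blast
  have t0: "\<forall>g. 0 \<le> t g" using g unfolding good_def by blast
  have m: "sum (lin t) PP = 1" using lin_mass t unfolding georeal_def by simp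
  have le: "lin t v \<le> 1" for v
  proof (cases "v \<in> PP")
    case True
    have "lin t v \<le> sum (lin t) PP"
      using True finP lin_nonneg[OF t0] by (intro member_le_sum) auto
    thus ?thesis using m by simp
  next
    case False thus ?thesis using lin_outside by simp
  qed
  have "supp t \<in> LL" using g unfolding good_def by blast
  then obtain \<tau> C where L: "isL \<tau> C" "supp t = (\<lambda>v. {v}) ` \<tau> \<union> C" by (rule LL_E)
  have "{v\<in>PP. lin t v \<noteq> 0} = \<tau> \<union> \<Union>C"
    using lin_supp[OF t0] isL_parts(3)[OF L] by simp
  hence KK: "{v\<in>PP. lin t v \<noteq> 0} \<in> K" using isL_D(4)[OF L(1)] by simp
  have A: "\<forall>v. 0 \<le> lin t v \<and> lin t v \<le> 1" using le lin_nonneg[OF t0] by simp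
  have B: "\<forall>v. v \<notin> PP \<longrightarrow> lin t v = 0" using lin_outside by simp
  show ?thesis unfolding georeal_def mem_Collect_eq using A B m KK by (intro conjI) assumption+
qed

lemma lin_onto: assumes x: "x \<in> georeal PP K" shows "\<exists>t\<in>georeal Gam LL. lin t = x"
proof -
  have x0: "\<forall>w. 0 \<le> x w" "\<forall>w. w \<notin> PP \<longrightarrow> x w = 0" "{w\<in>PP. x w \<noteq> 0} \<in> K" "sum x PP = 1"
    using x unfolding georeal_def by auto
  obtain t where t: "good t" "lin t = x" using surj_aux x0 by blast
  have t0: "\<forall>g. 0 \<le> t g" "\<forall>g. g \<notin> Gam \<longrightarrow> t g = 0" "supp t \<in> LL" using t(1) unfolding good_def by auto
  have s: "sum t Gam = 1" using lin_mass[of t] t(2) x0(4) by simp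
  have le: "t g \<le> 1" for g
  proof (cases "g \<in> Gam")
    case True
    have "t g \<le> sum t Gam" using True finite_Gam t0(1) by (intro member_le_sum) auto
    thus ?thesis using s by simp
  next
    case False thus ?thesis using t0(2) by simp
  qed
  have A: "\<forall>v. 0 \<le> t v \<and> t v \<le> 1" using t0(1) le by simp
  have B: "{v\<in>Gam. t v \<noteq> 0} \<in> LL" using t0(3) unfolding supp_def .
  have "t \<in> georeal Gam LL" unfolding georeal_def mem_Collect_eq using A t0(2) s B by (intro conjI) assumption+
  thus ?thesis using t(2) by blast
qed

lemma lin_image: "lin ` georeal Gam LL = georeal PP K"
  using lin_into lin_onto by blast

lemma lin_inj: "inj_on lin (georeal Gam LL)"
  unfolding inj_on_def using georeal_good inj_aux by blast

lemma lin_cont: "continuous_on UNIV lin"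
  unfolding lin_def[abs_def] lin_ext_def
  by (intro continuous_on_coordinatewise_then_product continuous_on_sum continuous_on_mult_right
      continuous_on_product_coordinates)

lemma georeal_compact: "compact (georeal Gam LL)"
proof -
  define box where "box = PiE (UNIV :: 'a set set) (\<lambda>_. {0..1::real})"
  have "compactin (product_topology (\<lambda>_. euclidean) UNIV) box"
    unfolding box_def by (subst compactin_PiE) simp
  hence cbox: "compact box" by (simp add: euclidean_product_topology)
  define A where "A F = box \<inter> (\<Inter>v\<in>-F. {t. t v = 0}) \<inter> {t. sum t Gam = 1}" for F
  have cA: "compact (A F)" for F
  proof -
    have "closed (\<Inter>v\<in>-F. {t::'a set \<Rightarrow> real. t v = 0})"
      by (intro closed_INT ballI closed_Collect_eq continuous_on_product_coordinates continuous_on_const)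
    moreover have "closed {t::'a set \<Rightarrow> real. sum t Gam = 1}"
      by (intro closed_Collect_eq continuous_on_sum continuous_on_product_coordinates continuous_on_const)
    ultimately show ?thesis unfolding A_def using cbox by (intro compact_Int_closed) auto
  qed
  have eq: "georeal Gam LL = (\<Union>F\<in>LL. A F)"
  proof (intro set_eqI iffI)
    fix t assume t: "t \<in> georeal Gam LL"
    define F where "F = {v\<in>Gam. t v \<noteq> 0}"
    have "F \<in> LL" using t unfolding georeal_def F_def by blast
    moreover have "t \<in> A F" using t unfolding georeal_def A_def box_def F_def by auto
    ultimately show "t \<in> (\<Union>F\<in>LL. A F)" by blast
  next
    fix t assume "t \<in> (\<Union>F\<in>LL. A F)"
    then obtain F where F: "F \<in> LL" "t \<in> A F" by blast
    have FG: "F \<subseteq> Gam" using LL_sub F(1) by blast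
    have "{v\<in>Gam. t v \<noteq> 0} \<subseteq> F" using F(2) unfolding A_def by auto
    hence "{v\<in>Gam. t v \<noteq> 0} \<in> LL" using LL_down F(1) by blast
    thus "t \<in> georeal Gam LL" using F(2) FG unfolding A_def box_def georeal_def by auto
  qed
  have "finite LL"
  proof -
    have "LL \<subseteq> Pow Gam" using LL_sub by blast
    thus ?thesis using finite_Gam by (meson finite_Pow_iff finite_subset)
  qed
  thus ?thesis unfolding eq using cA by (intro compact_UN) auto
qed

lemma hausdorff_fun: "Hausdorff_space (euclidean :: ('a \<Rightarrow> real) topology)"
proof -
  have "Hausdorff_space (product_topology (\<lambda>_::'a. (euclidean :: real topology)) UNIV)"
    by (simp add: Hausdorff_space_product_topology)
  thus ?thesis by (simp add: euclidean_product_topology)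
qed

lemma homeo: "\<exists>g. homeomorphism (georeal Gam LL) (georeal PP K) (lin_ext Gam barycenter) g"
proof -
  have e: "lin_ext Gam barycenter = lin" by (simp add: lin_def[abs_def])
  let ?S = "georeal Gam LL" and ?T = "georeal PP K"
  let ?X = "top_of_set ?S" and ?Y = "top_of_set ?T"
  have cS: "continuous_on ?S lin" using continuous_on_subset[OF lin_cont subset_UNIV] .
  have cm: "continuous_map ?X ?Y lin" using cS lin_image by auto
  have cs: "compact_space ?X" using georeal_compact by (intro compact_space_subtopology) simp
  have hY: "Hausdorff_space ?Y" using hausdorff_fun by (rule Hausdorff_space_subtopology)
  have clm: "closed_map ?X ?Y lin"
    using cs Hausdorff_imp_kc_space[OF hY] cm by (rule continuous_imp_closed_map_gen)
  have tX: "topspace ?X = ?S" and tY: "topspace ?Y = ?T" by simp_all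
  have "homeomorphic_map ?X ?Y lin"
    using cm clm lin_image lin_inj unfolding tX tY by (intro bijective_closed_imp_homeomorphic_map) simp_all
  then obtain g where g: "homeomorphic_maps ?X ?Y lin g" by (auto simp: homeomorphic_map_maps)
  have g1: "continuous_map ?Y ?X g" and g2: "\<forall>x\<in>?S. g (lin x) = x" and g3: "\<forall>y\<in>?T. lin (g y) = y"
    using g unfolding homeomorphic_maps_def tX tY by auto
  have "continuous_on ?T g" "g ` ?T \<subseteq> ?S" using g1 by auto
  hence "homeomorphism ?S ?T lin g"
    using cS lin_image g2 g3 by (intro homeomorphismI) auto
  thus ?thesis unfolding e by blast
qed

definition col where
  "col g = (if g \<in> SF then card g - 1 else if the_elem g \<in> S1 then c (the_elem g) else 0)"

lemma col_sing: "col {v} = (if v \<in> S1 then c v else 0)"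
  unfolding col_def using sing_notin_SF by simp

lemma col_ok:
  assumes F: "F \<in> LL" and g: "g1 \<in> F" "g2 \<in> F" "g1 \<noteq> g2" "g1 \<noteq> {star}" "g2 \<noteq> {star}" "col g1 = col g2"
  shows False
proof -
  obtain \<tau> C where L: "isL \<tau> C" "F = (\<lambda>v. {v}) ` \<tau> \<union> C" using F by (rule LL_E)
  have \<tau>P: "\<tau> \<subseteq> PP" and CS: "C \<subseteq> SF" and chain: "\<forall>x\<in>C. \<forall>y\<in>C. x \<subseteq> y \<or> y \<subseteq> x"
    and UK: "\<tau> \<union> \<Union>C \<in> K" and nt: "\<forall>\<delta>\<in>SF. \<not> \<delta> \<subseteq> \<tau>"
    and bb: "\<forall>\<gamma>\<in>C. \<forall>\<delta>\<in>SF. \<delta> \<subseteq> \<tau> \<union> \<gamma> \<longrightarrow> \<delta> \<subseteq> \<gamma>"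
    using isL_D(1,2,4)[OF L(1)] isL_D'[OF L(1)] by simp_all
  have \<tau>K: "\<tau> \<in> K" by (rule K_down[OF UK Un_upper1])
  have pairSF: "{v1, v2} \<in> SF" if "v1 \<in> \<tau>" "v2 \<in> \<tau>" "v1 \<noteq> v2" "v1 \<in> S1 \<union> S2" "v2 \<in> S1 \<union> S2"
    "v1 \<in> S2 \<or> v2 \<in> S2" "\<forall>a\<in>{v1, v2} \<inter> S1. c a = 0" for v1 v2
  proof -
    have "{v1, v2} \<subseteq> \<tau>" using that(1,2) by simp
    hence "{v1, v2} \<in> K" by (rule K_down[OF \<tau>K])
    moreover have "card {v1, v2} = 2" using that(3) by simp
    ultimately show ?thesis unfolding SF_def using that(4-7) by auto
  qed
  have ss: False if "v1 \<in> \<tau>" "v2 \<in> \<tau>" "v1 \<noteq> v2" "v1 \<noteq> star" "v2 \<noteq> star" "col {v1} = col {v2}" for v1 v2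
  proof -
    have v: "v1 \<in> S1 \<union> S2" "v2 \<in> S1 \<union> S2" using that \<tau>P by auto
    have sub: "{v1, v2} \<subseteq> \<tau>" using that(1,2) by simp
    consider "v1 \<in> S1" "v2 \<in> S1" | "v1 \<in> S1" "v2 \<in> S2" | "v1 \<in> S2" "v2 \<in> S1" | "v1 \<in> S2" "v2 \<in> S2"
      using v by blast
    thus False
    proof cases
      case 1
      then show ?thesis using c_inj[OF \<tau>K that(1,2)] that(3,6) by (simp add: col_sing)
    next
      case 2
      hence n: "v2 \<notin> S1" using disj by blast
      hence "c v1 = 0" using that(6) 2 by (simp add: col_sing)
      hence p7: "\<forall>a\<in>{v1, v2} \<inter> S1. c a = 0" using n by auto
      have p6: "v1 \<in> S2 \<or> v2 \<in> S2" using 2 by simp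
      have "{v1, v2} \<in> SF" by (rule pairSF[OF that(1-3) v p6 p7])
      thus False using nt sub by blast
    next
      case 3
      hence n: "v1 \<notin> S1" using disj by blast
      hence "c v2 = 0" using that(6) 3 by (simp add: col_sing)
      hence p7: "\<forall>a\<in>{v1, v2} \<inter> S1. c a = 0" using n by auto
      have p6: "v1 \<in> S2 \<or> v2 \<in> S2" using 3 by simp
      have "{v1, v2} \<in> SF" by (rule pairSF[OF that(1-3) v p6 p7])
      thus False using nt sub by blast
    next
      case 4
      hence n: "v1 \<notin> S1" "v2 \<notin> S1" using disj by blast+
      hence p7: "\<forall>a\<in>{v1, v2} \<inter> S1. c a = 0" by auto
      have p6: "v1 \<in> S2 \<or> v2 \<in> S2" using 4 by simp
      have "{v1, v2} \<in> SF" by (rule pairSF[OF that(1-3) v p6 p7])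
      thus False using nt sub by blast
    qed
  qed
  have sc: False if "v \<in> \<tau>" "v \<noteq> star" "\<gamma> \<in> C" "col {v} = col \<gamma>" for v \<gamma>
  proof -
    have \<gamma>S: "\<gamma> \<in> SF" using that(3) CS by blast
    have c2: "2 \<le> card \<gamma>" using SF_D(4)[OF \<gamma>S] .
    have fin\<gamma>: "finite \<gamma>" using SF_D(5)[OF \<gamma>S] .
    have col\<gamma>: "col \<gamma> = card \<gamma> - 1" unfolding col_def using \<gamma>S by simp
    have vS1: "v \<in> S1"
    proof (rule ccontr)
      assume "v \<notin> S1"
      hence "col {v} = 0" by (simp add: col_sing)
      thus False using that(4) col\<gamma> c2 by simp
    qed
    have cv: "c v = card \<gamma> - 1" using that(4) col\<gamma> vS1 by (simp add: col_sing)
    have v\<gamma>: "v \<notin> \<gamma>"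
    proof
      assume "v \<in> \<gamma>"
      hence "c v + 2 \<le> card \<gamma>" using SF_D(8)[OF \<gamma>S] vS1 by blast
      thus False using cv c2 by simp
    qed
    define \<delta> where "\<delta> = insert v \<gamma>"
    have cd: "card \<delta> = Suc (card \<gamma>)" unfolding \<delta>_def using fin\<gamma> v\<gamma> by simp
    have "\<delta> \<subseteq> \<tau> \<union> \<Union>C" unfolding \<delta>_def using that(1,3) by blast
    hence dK: "\<delta> \<in> K" by (rule K_down[OF UK])
    have "\<delta> \<in> SF"
    proof -
      have "\<delta> \<subseteq> S1 \<union> S2" unfolding \<delta>_def using vS1 SF_D(2)[OF \<gamma>S] by blast
      moreover have "\<delta> \<inter> S2 \<noteq> {}" unfolding \<delta>_def using SF_D(3)[OF \<gamma>S] by blast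
      moreover have "2 \<le> card \<delta>" using cd c2 by simp
      moreover have "\<forall>a\<in>\<delta> \<inter> S1. c a + 2 \<le> card \<delta>"
      proof
        fix a assume a: "a \<in> \<delta> \<inter> S1"
        show "c a + 2 \<le> card \<delta>"
        proof (cases "a = v")
          case True thus ?thesis using cv cd c2 by simp
        next
          case False
          hence "a \<in> \<gamma>" using a unfolding \<delta>_def by blast
          hence "c a + 2 \<le> card \<gamma>" using SF_D(8)[OF \<gamma>S] a by blast
          thus ?thesis using cd by simp
        qed
      qed
      ultimately show ?thesis unfolding SF_def using dK by blast
    qed
    moreover have "\<delta> \<subseteq> \<tau> \<union> \<gamma>" unfolding \<delta>_def using that(1) by blast
    ultimately have "\<delta> \<subseteq> \<gamma>" using bb that(3) by blast
    thus False using v\<gamma> unfolding \<delta>_def by blast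
  qed
  have cc: False if "\<gamma>1 \<in> C" "\<gamma>2 \<in> C" "\<gamma>1 \<noteq> \<gamma>2" "col \<gamma>1 = col \<gamma>2" for \<gamma>1 \<gamma>2
  proof -
    have S: "\<gamma>1 \<in> SF" "\<gamma>2 \<in> SF" using that(1,2) CS by auto
    have cols: "col \<gamma>1 = card \<gamma>1 - 1" "col \<gamma>2 = card \<gamma>2 - 1" unfolding col_def using S by simp_all
    have c2: "2 \<le> card \<gamma>1" "2 \<le> card \<gamma>2" using SF_D(4)[OF S(1)] SF_D(4)[OF S(2)] by simp_all
    have f: "finite \<gamma>1" "finite \<gamma>2" using SF_D(5)[OF S(1)] SF_D(5)[OF S(2)] by simp_all
    have o: "\<gamma>1 \<subseteq> \<gamma>2 \<or> \<gamma>2 \<subseteq> \<gamma>1" using chain that(1,2) by simp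
    have "card \<gamma>1 - 1 = card \<gamma>2 - 1" using cols that(4) by simp
    hence eq: "card \<gamma>1 = card \<gamma>2" using c2 by arith
    from o show False
    proof
      assume "\<gamma>1 \<subseteq> \<gamma>2"
      hence "\<gamma>1 = \<gamma>2" using card_subset_eq[OF f(2) _ eq] by blast
      thus False using that(3) by simp
    next
      assume "\<gamma>2 \<subseteq> \<gamma>1"
      hence "\<gamma>2 = \<gamma>1" using card_subset_eq[OF f(1) _ eq[symmetric]] by blast
      thus False using that(3) by simp
    qed
  qed
  show False
  proof (cases "g1 \<in> C")
    case g1C: True
    show False
    proof (cases "g2 \<in> C")
      case True show False by (rule cc[OF g1C True g(3) g(6)])
    next
      case False
      then obtain v where v: "v \<in> \<tau>" "g2 = {v}" using g(2) L(2) by blast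
      have vs: "v \<noteq> star" using g(5) v(2) by blast
      have "col {v} = col g1" using g(6) v(2) by simp
      thus False using sc[OF v(1) vs g1C] by blast
    qed
  next
    case g1n: False
    then obtain v1 where v1: "v1 \<in> \<tau>" "g1 = {v1}" using g(1) L(2) by blast
    have s1: "v1 \<noteq> star" using g(4) v1(2) by blast
    show False
    proof (cases "g2 \<in> C")
      case True
      have "col {v1} = col g2" using g(6) v1(2) by simp
      thus False using sc[OF v1(1) s1 True] by blast
    next
      case False
      then obtain v2 where v2: "v2 \<in> \<tau>" "g2 = {v2}" using g(2) L(2) by blast
      have s2: "v2 \<noteq> star" using g(5) v2(2) by blast
      have ne: "v1 \<noteq> v2" using g(3) v1(2) v2(2) by blast
      have "col {v1} = col {v2}" using g(6) v1(2) v2(2) by simp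
      thus False using ss[OF v1(1) v2(1) ne s1 s2] by blast
    qed
  qed
qed

lemma col_le: assumes "g \<in> Gam" "g \<noteq> {star}" shows "col g \<le> n"
proof (cases "g \<in> SF")
  case True
  have "card g \<le> Suc n" using K_dim SF_D(1,2)[OF True] by blast
  thus ?thesis unfolding col_def using True by simp
next
  case False
  then obtain v where v: "v \<in> PP" "g = {v}" using assms(1) unfolding Gam_def by blast
  show ?thesis using c_le v by (simp add: col_sing)
qed

lemma decomp: "n_decomposable n (Gam - {{star}}) (\<lambda>\<gamma> t. t \<gamma>) (georeal Gam LL)"
  unfolding n_decomposable_def
proof (intro exI[of _ col] conjI ballI impI)
  fix m assume "m \<in> Gam - {{star}}"
  thus "col m \<le> n" using col_le by blast
next
  fix m m' y assume m: "m \<in> Gam - {{star}}" "m' \<in> Gam - {{star}}" "m \<noteq> m' \<and> col m = col m'"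
    and y: "y \<in> georeal Gam LL"
  show "y m * y m' = 0"
  proof (rule ccontr)
    assume "y m * y m' \<noteq> 0"
    hence "m \<in> {g\<in>Gam. y g \<noteq> 0}" "m' \<in> {g\<in>Gam. y g \<noteq> 0}" using m by auto
    moreover have "{g\<in>Gam. y g \<noteq> 0} \<in> LL" using y unfolding georeal_def by blast
    ultimately show False using col_ok m by blast
  qed
qed

lemma part_iii: "{F \<in> LL. F \<subseteq> (\<lambda>\<sigma>. {\<sigma>}) ` S1} = (\<lambda>G. (\<lambda>\<sigma>. {\<sigma>}) ` G) ` {F \<in> K. F \<subseteq> S1}"
proof (intro set_eqI iffI)
  fix F assume F: "F \<in> {F \<in> LL. F \<subseteq> (\<lambda>\<sigma>. {\<sigma>}) ` S1}"
  obtain \<tau> C where L: "isL \<tau> C" "F = (\<lambda>v. {v}) ` \<tau> \<union> C" using F by (auto elim: LL_E)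
  have "C \<subseteq> SF" using isL_D(2)[OF L(1)] .
  have C: "C = {}"
  proof (rule ccontr)
    assume "C \<noteq> {}" then obtain x where x: "x \<in> C" by blast
    hence "x \<in> (\<lambda>\<sigma>. {\<sigma>}) ` S1" using F L(2) by blast
    then obtain \<sigma> where "x = {\<sigma>}" by blast
    moreover have "x \<in> SF" using x \<open>C \<subseteq> SF\<close> by blast
    ultimately show False using sing_notin_SF by blast
  qed
  have "\<tau> \<subseteq> S1" using F L(2) by auto
  moreover have "\<tau> \<in> K" using isL_D(4)[OF L(1)] C by simp
  ultimately show "F \<in> (\<lambda>G. (\<lambda>\<sigma>. {\<sigma>}) ` G) ` {F \<in> K. F \<subseteq> S1}" using L(2) C by blast
next
  fix F assume "F \<in> (\<lambda>G. (\<lambda>\<sigma>. {\<sigma>}) ` G) ` {F \<in> K. F \<subseteq> S1}"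
  then obtain G where G: "G \<in> K" "G \<subseteq> S1" "F = (\<lambda>\<sigma>. {\<sigma>}) ` G" by blast
  have "\<forall>\<delta>\<in>SF. \<not> \<delta> \<subseteq> G" using SF_D(3) G(2) disj by blast
  hence "isL G {}" using G K_sub by (intro isL_I) auto
  hence "F \<in> LL" unfolding LL_def using G(3) by blast
  thus "F \<in> {F \<in> LL. F \<subseteq> (\<lambda>\<sigma>. {\<sigma>}) ` S1}" using G by blast
qed

lemma part_iv2: assumes t: "t \<in> georeal Gam LL" "\<forall>\<gamma>. t \<gamma> \<noteq> 0 \<longrightarrow> \<gamma> \<in> (\<lambda>\<sigma>. {\<sigma>}) ` S1"
  and s: "\<sigma> \<in> S1" shows "t {\<sigma>} = lin_ext Gam barycenter t \<sigma>"
proof -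
  have "{\<sigma>} \<in> Gam" using s unfolding Gam_def by blast
  moreover have "\<forall>g\<in>Gam. g \<noteq> {\<sigma>} \<longrightarrow> t g = 0 \<or> \<sigma> \<notin> g" using t(2) by auto
  ultimately have "lin t \<sigma> = t {\<sigma>} / real (card {\<sigma>})" using lin_single by blast
  thus ?thesis unfolding lin_def by simp
qed

lemma part_iv3: "sum t (Gam - {{star}}) = (\<Sum>\<sigma>\<in>S1 \<union> S2. lin_ext Gam barycenter t \<sigma>)"
  using lin_sigma[of t] unfolding lin_def by simp

end

theorem proposition5p3:
  fixes \<Sigma>1 \<Sigma>2 :: "'a set" and star :: 'a and n :: nat
    and X :: "'x::t2_space set" and h :: "'a \<Rightarrow> 'x \<Rightarrow> real"
  defines "\<Sigma> \<equiv> \<Sigma>1 \<union> \<Sigma>2"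
  defines "\<Sigma>p \<equiv> insert star (\<Sigma>1 \<union> \<Sigma>2)"
  defines "K \<equiv> nerve_cx (insert star (\<Sigma>1 \<union> \<Sigma>2)) h X"
  defines "J \<equiv> {F \<in> nerve_cx (insert star (\<Sigma>1 \<union> \<Sigma>2)) h X. F \<subseteq> \<Sigma>1}"
  assumes fin: "finite \<Sigma>1" "finite \<Sigma>2"
    and disj: "\<Sigma>1 \<inter> \<Sigma>2 = {}" and star_notin: "star \<notin> \<Sigma>1 \<union> \<Sigma>2"
    and X_compact: "compact X"
    and h_cont: "\<And>\<sigma>. \<sigma> \<in> \<Sigma>p \<Longrightarrow> continuous_on X (h \<sigma>)"
    and h_pos: "\<And>\<sigma> x. \<sigma> \<in> \<Sigma>p \<Longrightarrow> x \<in> X \<Longrightarrow> 0 \<le> h \<sigma> x"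
    and h_gen: "\<And>x y. x \<in> X \<Longrightarrow> y \<in> X \<Longrightarrow> x \<noteq> y \<Longrightarrow> \<exists>\<sigma>\<in>\<Sigma>p. h \<sigma> x \<noteq> h \<sigma> y"
    and h_unital: "\<And>x. x \<in> X \<Longrightarrow> (\<Sum>\<sigma>\<in>\<Sigma>p. h \<sigma> x) = 1"
    and h_dim: "\<And>F x. F \<subseteq> \<Sigma> \<Longrightarrow> card F = n + 2 \<Longrightarrow> x \<in> X \<Longrightarrow> (\<Prod>\<sigma>\<in>F. h \<sigma> x) = 0"
    and h_dec: "n_decomposable n \<Sigma>1 h X"
  shows "\<exists>(\<Gamma> :: 'a set set) (L :: 'a set set set).
     fin_simplicial_complex \<Gamma> L
     \<comment> \<open>(i)\<close>
     \<and> (\<lambda>\<sigma>. {\<sigma>}) ` \<Sigma>p \<subseteq> \<Gamma> \<and> \<Gamma> \<subseteq> K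
     \<and> (\<forall>\<gamma>\<in>\<Gamma> - (\<lambda>\<sigma>. {\<sigma>}) ` \<Sigma>p. \<gamma> \<inter> \<Sigma>2 \<noteq> {})
     \<comment> \<open>(ii)\<close>
     \<and> (\<exists>g. homeomorphism (georeal \<Gamma> L) (georeal \<Sigma>p K) (lin_ext \<Gamma> barycenter) g)
     \<comment> \<open>(iii)\<close>
     \<and> {F \<in> L. F \<subseteq> (\<lambda>\<sigma>. {\<sigma>}) ` \<Sigma>1} = (\<lambda>G. (\<lambda>\<sigma>. {\<sigma>}) ` G) ` J
     \<comment> \<open>(iv)\<close>
     \<and> n_decomposable n (\<Gamma> - {{star}}) (\<lambda>\<gamma> t. t \<gamma>) (georeal \<Gamma> L)
     \<and> (\<forall>t\<in>georeal \<Gamma> L. (\<forall>\<gamma>. t \<gamma> \<noteq> 0 \<longrightarrow> \<gamma> \<in> (\<lambda>\<sigma>. {\<sigma>}) ` \<Sigma>1) \<longrightarrow>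
           (\<forall>\<sigma>\<in>\<Sigma>1. t {\<sigma>} = lin_ext \<Gamma> barycenter t \<sigma>))
     \<and> (\<forall>t\<in>georeal \<Gamma> L. (\<Sum>\<gamma>\<in>\<Gamma> - {{star}}. t \<gamma>) = (\<Sum>\<sigma>\<in>\<Sigma>. lin_ext \<Gamma> barycenter t \<sigma>))"
proof -
  have "\<exists>c :: 'a \<Rightarrow> nat. (\<forall>m\<in>\<Sigma>1. c m \<le> n) \<and>
        (\<forall>m\<in>\<Sigma>1. \<forall>m'\<in>\<Sigma>1. m \<noteq> m' \<and> c m = c m' \<longrightarrow> (\<forall>y\<in>X. h m y * h m' y = 0))"
    using h_dec by (simp only: n_decomposable_def)
  then obtain c :: "'a \<Rightarrow> nat" where cc: "(\<forall>m\<in>\<Sigma>1. c m \<le> n) \<and>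
        (\<forall>m\<in>\<Sigma>1. \<forall>m'\<in>\<Sigma>1. m \<noteq> m' \<and> c m = c m' \<longrightarrow> (\<forall>y\<in>X. h m y * h m' y = 0))" ..
  have c1: "\<forall>m\<in>\<Sigma>1. c m \<le> n" using cc by (rule conjunct1)
  have c2: "\<forall>m\<in>\<Sigma>1. \<forall>m'\<in>\<Sigma>1. m \<noteq> m' \<and> c m = c m' \<longrightarrow> (\<forall>y\<in>X. h m y * h m' y = 0)"
    using cc by (rule conjunct2)
  have finP: "finite (insert star (\<Sigma>1 \<union> \<Sigma>2))" using fin by simp
  have Kmem: "F \<in> K \<longleftrightarrow> F \<subseteq> insert star (\<Sigma>1 \<union> \<Sigma>2) \<and> (F = {} \<or> card F = 1 \<or>
      (finite F \<and> F \<noteq> {} \<and> (\<exists>x\<in>X. (\<Prod>\<sigma>\<in>F. h \<sigma> x) \<noteq> 0)))" for F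
    unfolding K_def nerve_cx_def by simp
  have big: "\<exists>x\<in>X. (\<Prod>\<sigma>\<in>F. h \<sigma> x) \<noteq> 0" if "F \<in> K" "2 \<le> card F" for F
  proof -
    have "F \<noteq> {}" "card F \<noteq> 1" using that(2) by auto
    thus ?thesis using Kmem[of F] that(1) by blast
  qed
  have prod_nz: "h \<sigma> x \<noteq> 0" if "(\<Prod>\<sigma>\<in>F. h \<sigma> x) \<noteq> 0" "\<sigma> \<in> F" "finite F" for F \<sigma> x
    using that by auto
  have KP: "F \<subseteq> insert star (\<Sigma>1 \<union> \<Sigma>2)" if "F \<in> K" for F using Kmem[of F] that by blast
  have Kfin: "finite F" if "F \<in> K" for F using finite_subset[OF KP[OF that] finP] .
  interpret S: sdctx \<Sigma>1 \<Sigma>2 star n K c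
  proof (unfold_locales)
    show "finite \<Sigma>1" "finite \<Sigma>2" using fin by auto
    show "\<Sigma>1 \<inter> \<Sigma>2 = {}" by (rule disj)
    show "star \<notin> \<Sigma>1 \<union> \<Sigma>2" by (rule star_notin)
  next
    fix F assume "F \<in> K" thus "F \<subseteq> insert star (\<Sigma>1 \<union> \<Sigma>2)" by (rule KP)
  next
    fix F G assume FG: "F \<in> K" "G \<subseteq> F"
    have FP: "F \<subseteq> insert star (\<Sigma>1 \<union> \<Sigma>2)" by (rule KP[OF FG(1)])
    have GP: "G \<subseteq> insert star (\<Sigma>1 \<union> \<Sigma>2)" using FP FG(2) by (rule order_trans[rotated])
    have finF: "finite F" by (rule Kfin[OF FG(1)])
    have finG: "finite G" using finite_subset[OF FG(2) finF] .
    show "G \<in> K"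
    proof (cases "card G \<le> 1")
      case True
      hence "G = {} \<or> card G = 1" using finG by (cases "card G") auto
      thus ?thesis using Kmem[of G] GP by blast
    next
      case False
      have "card G \<le> card F" using card_mono[OF finF FG(2)] .
      hence "2 \<le> card F" using False by linarith
      then obtain x where x: "x \<in> X" "(\<Prod>\<sigma>\<in>F. h \<sigma> x) \<noteq> 0" using big FG(1) by blast
      have "\<forall>\<sigma>\<in>G. h \<sigma> x \<noteq> 0" using prod_nz[OF x(2) _ finF] FG(2) by blast
      hence "(\<Prod>\<sigma>\<in>G. h \<sigma> x) \<noteq> 0" using finG by simp
      moreover have "G \<noteq> {}" using False by auto
      ultimately show ?thesis using Kmem[of G] GP finG x(1) by blast
    qed
  next
    fix v assume "v \<in> insert star (\<Sigma>1 \<union> \<Sigma>2)" thus "{v} \<in> K" using Kmem by simp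
  next
    fix F assume F: "F \<in> K" "F \<subseteq> \<Sigma>1 \<union> \<Sigma>2"
    show "card F \<le> Suc n"
    proof (rule ccontr)
      assume "\<not> card F \<le> Suc n"
      hence ge: "n + 2 \<le> card F" by simp
      hence "2 \<le> card F" by simp
      then obtain x where x: "x \<in> X" "(\<Prod>\<sigma>\<in>F. h \<sigma> x) \<noteq> 0" using big F(1) by blast
      obtain G where G: "G \<subseteq> F" "card G = n + 2" "finite G" using obtain_subset_with_card_n[OF ge] by blast
      have "G \<subseteq> \<Sigma>" unfolding \<Sigma>_def using G(1) F(2) by blast
      hence "(\<Prod>\<sigma>\<in>G. h \<sigma> x) = 0" using h_dim G(2) x(1) by blast
      moreover have "\<forall>\<sigma>\<in>G. h \<sigma> x \<noteq> 0" using prod_nz[OF x(2) _ Kfin[OF F(1)]] G(1) by blast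
      ultimately show False using G(3) by simp
    qed
  next
    fix v assume "v \<in> \<Sigma>1" thus "c v \<le> n" using c1 by blast
  next
    fix F a b assume ab: "F \<in> K" "a \<in> F" "b \<in> F" "a \<in> \<Sigma>1" "b \<in> \<Sigma>1" "c a = c b"
    show "a = b"
    proof (rule ccontr)
      assume ne: "a \<noteq> b"
      have finF: "finite F" by (rule Kfin[OF ab(1)])
      have "{a, b} \<subseteq> F" using ab(2,3) by simp
      hence "card {a, b} \<le> card F" using card_mono[OF finF] by blast
      hence "2 \<le> card F" using ne by simp
      then obtain x where x: "x \<in> X" "(\<Prod>\<sigma>\<in>F. h \<sigma> x) \<noteq> 0" using big ab(1) by blast
      have "h a x \<noteq> 0" "h b x \<noteq> 0" using prod_nz[OF x(2) _ finF] ab(2,3) by blast+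
      hence "h a x * h b x \<noteq> 0" by simp
      moreover have "h a x * h b x = 0" using c2 ab(4,5,6) ne x(1) by blast
      ultimately show False by simp
    qed
  qed
  have J: "J = {F \<in> K. F \<subseteq> \<Sigma>1}" unfolding J_def K_def by simp
  have g1: "(\<lambda>\<sigma>. {\<sigma>}) ` insert star (\<Sigma>1 \<union> \<Sigma>2) \<subseteq> S.Gam" unfolding S.Gam_def by blast
  have g2: "S.Gam \<subseteq> K"
  proof
    fix \<gamma> assume "\<gamma> \<in> S.Gam"
    hence "\<gamma> \<in> (\<lambda>v. {v}) ` insert star (\<Sigma>1 \<union> \<Sigma>2) \<or> \<gamma> \<in> S.SF" unfolding S.Gam_def by blast
    thus "\<gamma> \<in> K" using S.K_sing S.SF_D(1) by blast
  qed
  have g3: "\<forall>\<gamma>\<in>S.Gam - (\<lambda>\<sigma>. {\<sigma>}) ` insert star (\<Sigma>1 \<union> \<Sigma>2). \<gamma> \<inter> \<Sigma>2 \<noteq> {}"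
  proof
    fix \<gamma> assume "\<gamma> \<in> S.Gam - (\<lambda>\<sigma>. {\<sigma>}) ` insert star (\<Sigma>1 \<union> \<Sigma>2)"
    hence "\<gamma> \<in> S.SF" unfolding S.Gam_def by blast
    thus "\<gamma> \<inter> \<Sigma>2 \<noteq> {}" by (rule S.SF_D(3))
  qed
  have g8: "\<forall>t\<in>georeal S.Gam S.LL. (\<forall>\<gamma>. t \<gamma> \<noteq> 0 \<longrightarrow> \<gamma> \<in> (\<lambda>\<sigma>. {\<sigma>}) ` \<Sigma>1) \<longrightarrow>
           (\<forall>\<sigma>\<in>\<Sigma>1. t {\<sigma>} = lin_ext S.Gam barycenter t \<sigma>)"
    using S.part_iv2 by blast
  have g9: "\<forall>t\<in>georeal S.Gam S.LL. (\<Sum>\<gamma>\<in>S.Gam - {{star}}. t \<gamma>) = (\<Sum>\<sigma>\<in>\<Sigma>1 \<union> \<Sigma>2. lin_ext S.Gam barycenter t \<sigma>)"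
    using S.part_iv3 by blast
  show ?thesis
    unfolding \<Sigma>p_def \<Sigma>_def J
    apply (rule exI[of _ S.Gam], rule exI[of _ S.LL])
    apply (intro conjI)
            apply (rule S.fin_LL)
           apply (rule g1)
          apply (rule g2)
         apply (rule g3)
        apply (rule S.homeo)
       apply (rule S.part_iii)
      apply (rule S.decomp)
     apply (rule g8)
    apply (rule g9)
    done
qed

end
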